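(* Let $s\ge r\ge2$, let $Q$ be an $s$-vertex $r$-graph and let $\mathcal P$ be a hereditary and multiplicative property of $r$-graphs. Then $\lambda^{(p)}(Q,\mathcal P)=\pi(Q,\mathcal P)$ for every $p\ge1$; in particular $\mathcal P$ is $Q$-flat.
   Context: An $r$-graph ($r\ge 2$) is a finite hypergraph all of whose edges have exactly $r$ vertices. For $I\subseteq V(H)$, $H[I]$ denotes the induced subhypergraph on $I$. For an $s$-vertex $r$-graph $Q$ and an $r$-graph $H$, $\mathcal N(Q,H)$ is the number of (not necessarily induced) subgraphs of $H$ isomorphic to $Q$. For an $n$-vertex $r$-graph $H$ with vertex set $[n]$ and $\mathbf x\in\mathbb R^n$, $P_{Q,H}(\mathbf x)=s!\sum_{\{i_1,\dots,i_s\}\in\binom{[n]}{s}}\mathcal N(Q,H[\{i_1,\dots,i_s\}])\,x_{i_1}\cdots x_{i_s}$, and for $p\ge1$, $\lambda^{(p)}(Q,H)=\max_{\|\mathbf x\|_p=1}P_{Q,H}(\mathbf x)$. A hereditary property $\mathcal P$ of $r$-graphs is a family of $r$-graphs closed under isomorphism and under taking induced subgraphs; as a standing assumption, whenever $H\in\mathcal P$, the disjoint union of $H$ with an isolated vertex is also in $\mathcal P$. $\mathcal P_n$ is the set of members of $\mathcal P$ with $n$ vertices. $ex(Q,\mathcal P_n)=\max\{\mathcal N(Q,H):H\in\mathcal P_n\}$ and $\pi(Q,\mathcal P)=\lim_{n\to\infty}ex(Q,\mathcal P_n)/\binom ns$ (this limit exists). $\lambda^{(p)}(Q,\mathcal P_n)=\max\{\lambda^{(p)}(Q,H):H\in\mathcal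 P_n\}$ and $\lambda^{(p)}(Q,\mathcal P)=\lim_{n\to\infty}\lambda^{(p)}(Q,\mathcal P_n)n^{s/p-s}$ (this limit exists). For an $r$-graph $H$ on vertex set $[n]$ and positive integers $k_1,\dots,k_n$, the blow-up $H(k_1,\dots,k_n)$ is obtained by replacing each vertex $i$ by a class $V_i$ of $k_i$ vertices (classes pairwise disjoint), whose edges are all $r$-sets $\{u_1,\dots,u_r\}$ with $u_j\in V_{i_j}$ for some edge $\{i_1,\dots,i_r\}\in E(H)$. $\mathcal P$ is multiplicative if every blow-up of every member of $\mathcal P$ is in $\mathcal P$. $\mathcal P$ is $Q$-flat if $\lambda^{(1)}(Q,\mathcal P)=\pi(Q,\mathcal P)$. *)

theory Defs
  imports Complex_Main
begin

type_synonym hg = "nat set \<times> nat set set"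

definition verts :: "hg \<Rightarrow> nat set" where "verts H = fst H"
definition edges :: "hg \<Rightarrow> nat set set" where "edges H = snd H"

definition is_rgraph :: "nat \<Rightarrow> hg \<Rightarrow> bool" where
  "is_rgraph r H \<longleftrightarrow> finite (verts H) \<and> (\<forall>e\<in>edges H. e \<subseteq> verts H \<and> card e = r)"

definition induced :: "hg \<Rightarrow> nat set \<Rightarrow> hg" where
  "induced H I = (I, {e \<in> edges H. e \<subseteq> I})"

definition hg_iso :: "hg \<Rightarrow> hg \<Rightarrow> (nat \<Rightarrow> nat) \<Rightarrow> bool" where
  "hg_iso G H f \<longleftrightarrow> bij_betw f (verts G) (verts H) \<and> (image f) ` edges G = edges H"

definition isomorphic :: "hg \<Rightarrow> hg \<Rightarrow> bool" where
  "isomorphic G H \<longleftrightarrow> (\<exists>f. hg_iso G H f)"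

definition subgraph :: "hg \<Rightarrow> hg \<Rightarrow> bool" where
  "subgraph F H \<longleftrightarrow> verts F \<subseteq> verts H \<and> edges F \<subseteq> edges H \<and> (\<forall>e\<in>edges F. e \<subseteq> verts F)"

definition num_copies :: "hg \<Rightarrow> hg \<Rightarrow> nat" where
  "num_copies Q H = card {F. subgraph F H \<and> isomorphic Q F}"

definition poly_QH :: "hg \<Rightarrow> hg \<Rightarrow> (nat \<Rightarrow> real) \<Rightarrow> real" where
  "poly_QH Q H x = fact (card (verts Q)) *
     (\<Sum>I\<in>{I. I \<subseteq> verts H \<and> card I = card (verts Q)}.
        real (num_copies Q (induced H I)) * (\<Prod>i\<in>I. x i))"

definition pnorm :: "real \<Rightarrow> nat set \<Rightarrow> (nat \<Rightarrow> real) \<Rightarrow> real" where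
  "pnorm p V x = (\<Sum>i\<in>V. \<bar>x i\<bar> powr p) powr (1 / p)"

definition lagr :: "real \<Rightarrow> hg \<Rightarrow> hg \<Rightarrow> real" where
  "lagr p Q H = Sup {poly_QH Q H x | x. pnorm p (verts H) x = 1}"

definition hereditary :: "nat \<Rightarrow> hg set \<Rightarrow> bool" where
  "hereditary r P \<longleftrightarrow>
     (\<forall>H\<in>P. is_rgraph r H)
   \<and> (\<forall>G H. H \<in> P \<longrightarrow> isomorphic H G \<longrightarrow> G \<in> P)
   \<and> (\<forall>H\<in>P. \<forall>I. I \<subseteq> verts H \<longrightarrow> induced H I \<in> P)"

text \<open>standing assumption: adding an isolated vertex stays in the property\<close>
definition isolated_closed :: "hg set \<Rightarrow> bool" where
  "isolated_closed P \<longleftrightarrow> (\<forall>H\<in>P. \<forall>v. v \<notin> verts H \<longrightarrow> (insert v (verts H), edges H) \<in> P)"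

text \<open>G is a blow-up of H: vertex classes are the (nonempty) fibres of phi\<close>
definition is_blowup :: "hg \<Rightarrow> hg \<Rightarrow> bool" where
  "is_blowup G H \<longleftrightarrow> finite (verts G) \<and>
     (\<exists>\<phi>. \<phi> ` verts G = verts H \<and>
        (\<forall>e. e \<in> edges G \<longleftrightarrow> e \<subseteq> verts G \<and> inj_on \<phi> e \<and> \<phi> ` e \<in> edges H))"

definition multiplicative :: "hg set \<Rightarrow> bool" where
  "multiplicative P \<longleftrightarrow> (\<forall>H\<in>P. \<forall>G. is_blowup G H \<longrightarrow> G \<in> P)"

definition members_n :: "hg set \<Rightarrow> nat \<Rightarrow> hg set" where
  "members_n P n = {H \<in> P. card (verts H) = n}"

definition ex_num :: "hg \<Rightarrow> hg set \<Rightarrow> nat \<Rightarrow> nat" where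
  "ex_num Q P n = Max (num_copies Q ` members_n P n)"

definition lagr_n :: "real \<Rightarrow> hg \<Rightarrow> hg set \<Rightarrow> nat \<Rightarrow> real" where
  "lagr_n p Q P n = Sup (lagr p Q ` members_n P n)"

definition pi_seq :: "hg \<Rightarrow> hg set \<Rightarrow> nat \<Rightarrow> real" where
  "pi_seq Q P n = real (ex_num Q P n) / real (n choose card (verts Q))"

definition lagr_seq :: "real \<Rightarrow> hg \<Rightarrow> hg set \<Rightarrow> nat \<Rightarrow> real" where
  "lagr_seq p Q P n = lagr_n p Q P n * real n powr (real (card (verts Q)) / p - real (card (verts Q)))"

definition pi_prop :: "hg \<Rightarrow> hg set \<Rightarrow> real" where
  "pi_prop Q P = lim (pi_seq Q P)"

definition lagr_prop :: "real \<Rightarrow> hg \<Rightarrow> hg set \<Rightarrow> real" where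
  "lagr_prop p Q P = lim (lagr_seq p Q P)"

end

theory Submission imports Defs "HOL-Analysis.Analysis" "HOL-Library.Nat_Bijection" begin

definition cps :: "hg \<Rightarrow> hg \<Rightarrow> hg set" where
  "cps Q H = {F. subgraph F H \<and> isomorphic Q F}"

lemma num_copies_cps: "num_copies Q H = card (cps Q H)"
  by (simp add: num_copies_def cps_def)

lemma verts_induced[simp]: "verts (induced H I) = I"
  and edges_induced[simp]: "edges (induced H I) = {e \<in> edges H. e \<subseteq> I}"
  by (auto simp: induced_def verts_def edges_def)

lemma subgraph_Pow: "subgraph F H \<Longrightarrow> F \<in> Pow (verts H) \<times> Pow (Pow (verts H))"
  by (cases F) (auto simp: subgraph_def verts_def edges_def)

lemma cps_subset: "cps Q H \<subseteq> Pow (verts H) \<times> Pow (Pow (verts H))"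
  unfolding cps_def using subgraph_Pow by blast

lemma finite_cps_induced: "finite I \<Longrightarrow> finite (cps Q (induced H I))"
  by (rule finite_subset[OF cps_subset]) auto

lemma finite_cps: "finite (verts H) \<Longrightarrow> finite (cps Q H)"
  by (rule finite_subset[OF cps_subset]) auto

lemma card_cps_le: "finite (verts H) \<Longrightarrow> card (cps Q H) \<le> 2 ^ card (verts H) * 2 ^ (2 ^ card (verts H))"
proof -
  assume f: "finite (verts H)"
  have "card (cps Q H) \<le> card (Pow (verts H) \<times> Pow (Pow (verts H)))"
    by (rule card_mono[OF _ cps_subset]) (use f in auto)
  also have "\<dots> = 2 ^ card (verts H) * 2 ^ (2 ^ card (verts H))"
    using f by (simp add: card_cartesian_product card_Pow)
  finally show ?thesis .
qed

lemma iso_card: "isomorphic Q F \<Longrightarrow> card (verts F) = card (verts Q)"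
  by (auto simp: isomorphic_def hg_iso_def bij_betw_same_card)

lemma cps_verts_sub: "F \<in> cps Q H \<Longrightarrow> verts F \<subseteq> verts H"
  by (auto simp: cps_def subgraph_def)

lemma cps_induced_verts:
  assumes "F \<in> cps Q (induced H I)" "finite I" "card I = card (verts Q)"
  shows "verts F = I"
proof -
  have "verts F \<subseteq> I" using cps_verts_sub[OF assms(1)] by simp
  moreover have "card (verts F) = card I" using assms iso_card by (auto simp: cps_def)
  ultimately show ?thesis using assms(2) card_subset_eq by blast
qed

lemma N_le_sum:
  assumes f: "finite (verts H)"
  shows "card (cps Q H) \<le> (\<Sum>I\<in>{I. I \<subseteq> verts H \<and> card I = card (verts Q)}. card (cps Q (induced H I)))"
proof -
  let ?S = "{I. I \<subseteq> verts H \<and> card I = card (verts Q)}"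
  have fS: "finite ?S" using f by auto
  have "card (cps Q H) \<le> card (Sigma ?S (\<lambda>I. cps Q (induced H I)))"
  proof (rule card_inj_on_le[where f = "\<lambda>F. (verts F, F)"])
    show "inj_on (\<lambda>F. (verts F, F)) (cps Q H)" by (auto simp: inj_on_def)
    show "(\<lambda>F. (verts F, F)) ` cps Q H \<subseteq> Sigma ?S (\<lambda>I. cps Q (induced H I))"
    proof clarsimp
      fix F assume F: "F \<in> cps Q H"
      have "verts F \<subseteq> verts H" using cps_verts_sub[OF F] .
      moreover have "card (verts F) = card (verts Q)" using F iso_card by (auto simp: cps_def)
      moreover have "F \<in> cps Q (induced H (verts F))"
        using F by (auto simp: cps_def subgraph_def)
      ultimately show "verts F \<subseteq> verts H \<and> card (verts F) = card (verts Q) \<and> F \<in> cps Q (induced H (verts F))"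
        by blast
    qed
    show "finite (Sigma ?S (\<lambda>I. cps Q (induced H I)))"
      using fS f by (intro finite_SigmaI finite_cps_induced) (auto intro: finite_subset)
  qed
  also have "\<dots> = (\<Sum>I\<in>?S. card (cps Q (induced H I)))"
    using fS f by (intro card_SigmaI) (auto intro: finite_cps_induced finite_subset)
  finally show ?thesis .
qed

lemma cps_induced_le:
  assumes "finite I" "card I = card (verts Q)"
  shows "card (cps Q (induced H I)) \<le> 2 ^ card (verts Q) * 2 ^ (2 ^ card (verts Q))"
  using card_cps_le[of "induced H I" Q] assms by simp


lemma cps_mono:
  assumes "verts H \<subseteq> verts H'" "edges H' = edges H"
  shows "cps Q H \<subseteq> cps Q H'"
  using assms by (auto simp: cps_def subgraph_def)

locale hprop =
  fixes r :: nat and P :: "hg set"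
  assumes r2: "2 \<le> r" and ne: "P \<noteq> {}" and her: "hereditary r P"
    and iso_cl: "isolated_closed P" and mult: "multiplicative P"
begin

lemma fin: "H \<in> P \<Longrightarrow> finite (verts H)"
  using her by (auto simp: hereditary_def is_rgraph_def)

lemma ind: "H \<in> P \<Longrightarrow> I \<subseteq> verts H \<Longrightarrow> induced H I \<in> P"
  using her by (auto simp: hereditary_def)

lemma isoP: "H \<in> P \<Longrightarrow> isomorphic H G \<Longrightarrow> G \<in> P"
  using her unfolding hereditary_def by blast

lemma empty_in: "({}, {}) \<in> P"
proof -
  obtain H where H: "H \<in> P" using ne by auto
  have "induced H {} \<in> P" using ind[OF H] by auto
  moreover have "induced H {} = ({}, {})"
  proof -
    have "{e \<in> edges H. e \<subseteq> {}} = {}"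
    proof (rule ccontr)
      assume "{e \<in> edges H. e \<subseteq> {}} \<noteq> {}"
      then have "{} \<in> edges H" by auto
      moreover have "\<forall>e\<in>edges H. card e = r" using her H unfolding hereditary_def is_rgraph_def by blast
      ultimately have "card ({}::nat set) = r" by blast
      then show False using r2 by simp
    qed
    then show ?thesis by (simp add: induced_def)
  qed
  ultimately show ?thesis by simp
qed

lemma pad_aux:
  "H \<in> P \<Longrightarrow> \<exists>H'\<in>P. card (verts H') = card (verts H) + d \<and> verts H \<subseteq> verts H' \<and> edges H' = edges H"
proof (induction d arbitrary: H)
  case 0 then show ?case by auto
next
  case (Suc d)
  obtain v where v: "v \<notin> verts H" using fin[OF Suc.prems] ex_new_if_finite[OF infinite_UNIV_nat] by blast
  let ?H1 = "(insert v (verts H), edges H)"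
  have H1: "?H1 \<in> P" using iso_cl Suc.prems v by (auto simp: isolated_closed_def)
  have c1: "card (verts ?H1) = Suc (card (verts H))"
    using v fin[OF Suc.prems] by (simp add: verts_def)
  obtain H' where "H' \<in> P" "card (verts H') = card (verts ?H1) + d" "verts ?H1 \<subseteq> verts H'" "edges H' = edges ?H1"
    using Suc.IH[OF H1] by blast
  then show ?case using c1 by (intro bexI[of _ H']) (auto simp: verts_def edges_def)
qed

lemma pad:
  assumes "H \<in> P" "card (verts H) \<le> m"
  shows "\<exists>H'\<in>P. card (verts H') = m \<and> verts H \<subseteq> verts H' \<and> edges H' = edges H"
  using pad_aux[OF assms(1), of "m - card (verts H)"] assms(2) by auto

lemma exists_n: "\<exists>H\<in>P. card (verts H) = n"
proof -
  have "card (verts ({}::nat set, {}::nat set set)) \<le> n" by (simp add: verts_def)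
  from pad[OF empty_in this] show ?thesis by blast
qed

lemma members_ne: "members_n P n \<noteq> {}"
  using exists_n[of n] unfolding members_n_def by blast

lemma finite_img: "finite (num_copies Q ` members_n P n)"
proof (rule finite_subset)
  show "num_copies Q ` members_n P n \<subseteq> {..2 ^ n * 2 ^ (2 ^ n)}"
  proof
    fix k assume "k \<in> num_copies Q ` members_n P n"
    then obtain H where H: "H \<in> P" "card (verts H) = n" "k = card (cps Q H)"
      by (auto simp: members_n_def num_copies_cps)
    then show "k \<in> {..2 ^ n * 2 ^ (2 ^ n)}" using card_cps_le[OF fin[OF H(1)], of Q] by simp
  qed
qed auto

lemma ex_ge: "H \<in> P \<Longrightarrow> card (verts H) = n \<Longrightarrow> card (cps Q H) \<le> ex_num Q P n"
  unfolding ex_num_def num_copies_cps[symmetric]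
  by (rule Max_ge[OF finite_img]) (auto simp: members_n_def)

lemma ex_attained: "\<exists>H\<in>P. card (verts H) = n \<and> card (cps Q H) = ex_num Q P n"
proof -
  have "ex_num Q P n \<in> num_copies Q ` members_n P n"
    unfolding ex_num_def using finite_img members_ne by (intro Max_in) auto
  then show ?thesis by (auto simp: members_n_def num_copies_cps)
qed

lemma ex_mono:
  assumes "n \<le> m" shows "ex_num Q P n \<le> ex_num Q P m"
proof -
  obtain H where H: "H \<in> P" "card (verts H) = n" "card (cps Q H) = ex_num Q P n"
    using ex_attained by blast
  obtain H' where H': "H' \<in> P" "card (verts H') = m" "verts H \<subseteq> verts H'" "edges H' = edges H"
    using pad[OF H(1)] H(2) assms by blast
  have "card (cps Q H) \<le> card (cps Q H')"
    by (rule card_mono[OF finite_cps[OF fin[OF H'(1)]] cps_mono[OF H'(3,4)]])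
  also have "\<dots> \<le> ex_num Q P m" using ex_ge H' by blast
  finally show ?thesis using H by simp
qed

end

lemma verts_pair[simp]: "verts (a, b) = a" and edges_pair[simp]: "edges (a, b) = b"
  by (auto simp: verts_def edges_def)

definition vG :: "hg \<Rightarrow> (nat \<Rightarrow> nat) \<Rightarrow> nat set" where
  "vG H k = prod_encode ` Sigma (verts H) (\<lambda>i. {..<k i})"

definition phi :: "nat \<Rightarrow> nat" where "phi v = fst (prod_decode v)"

definition bl :: "hg \<Rightarrow> (nat \<Rightarrow> nat) \<Rightarrow> hg" where
  "bl H k = (vG H k, {e. e \<subseteq> vG H k \<and> inj_on phi e \<and> phi ` e \<in> edges H})"

lemma phi_enc[simp]: "phi (prod_encode (i, a)) = i"
  by (simp add: phi_def)

lemma card_vG: "finite (verts H) \<Longrightarrow> card (vG H k) = (\<Sum>i\<in>verts H. k i)"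
proof -
  assume f: "finite (verts H)"
  have "card (vG H k) = card (Sigma (verts H) (\<lambda>i. {..<k i}))"
    unfolding vG_def by (rule card_image) (auto intro: inj_on_subset[OF inj_prod_encode])
  also have "\<dots> = (\<Sum>i\<in>verts H. k i)" using f by (simp add: card_SigmaI)
  finally show ?thesis .
qed

lemma is_blowup_bl:
  assumes f: "finite (verts H)" and k: "\<forall>i\<in>verts H. 1 \<le> k i"
  shows "is_blowup (bl H k) H"
  unfolding is_blowup_def
proof (intro conjI exI[of _ phi])
  show "finite (verts (bl H k))" using f by (simp add: bl_def vG_def)
  show "phi ` verts (bl H k) = verts H"
  proof
    show "phi ` verts (bl H k) \<subseteq> verts H" by (auto simp: bl_def vG_def)
    show "verts H \<subseteq> phi ` verts (bl H k)"
    proof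
      fix i assume i: "i \<in> verts H"
      then have "prod_encode (i, 0) \<in> vG H k" using k by (force simp: vG_def)
      then show "i \<in> phi ` verts (bl H k)" by (force simp: bl_def)
    qed
  qed
  show "\<forall>e. (e \<in> edges (bl H k)) = (e \<subseteq> verts (bl H k) \<and> inj_on phi e \<and> phi ` e \<in> edges H)"
    by (simp add: bl_def)
qed

context hprop begin

lemma bl_in: "H \<in> P \<Longrightarrow> \<forall>i\<in>verts H. 1 \<le> k i \<Longrightarrow> bl H k \<in> P"
  using mult is_blowup_bl fin unfolding multiplicative_def by blast

end

definition lift :: "(nat \<Rightarrow> nat) \<Rightarrow> hg \<Rightarrow> hg" where
  "lift \<sigma> F = ((\<lambda>i. prod_encode (i, \<sigma> i)) ` verts F, image (\<lambda>i. prod_encode (i, \<sigma> i)) ` edges F)"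

lemma inj_psi: "inj_on (\<lambda>i. prod_encode (i, \<sigma> i)) A"
  by (auto simp: inj_on_def)


lemma lift_in:
  assumes I: "I \<subseteq> verts H" "finite I" "card I = card (verts Q)"
    and F: "F \<in> cps Q (induced H I)" and \<sigma>: "\<sigma> \<in> PiE I (\<lambda>i. {..<k i})"
  shows "lift \<sigma> F \<in> cps Q (bl H k)"
proof -
  let ?psi = "\<lambda>i. prod_encode (i, \<sigma> i)"
  have vF: "verts F = I" using cps_induced_verts[OF F I(2,3)] .
  have sF: "subgraph F (induced H I)" and iF: "isomorphic Q F" using F by (auto simp: cps_def)
  have eF: "\<And>f. f \<in> edges F \<Longrightarrow> f \<in> edges H \<and> f \<subseteq> I"
    using sF by (auto simp: subgraph_def)
  have psiV: "?psi ` I \<subseteq> vG H k"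
    using I(1) \<sigma> by (auto simp: vG_def PiE_def Pi_def)
  have phipsi: "\<And>f. phi ` ?psi ` f = f" by (simp add: image_image)
  have sub: "subgraph (lift \<sigma> F) (bl H k)"
    unfolding subgraph_def
  proof (intro conjI)
    show "verts (lift \<sigma> F) \<subseteq> verts (bl H k)" using psiV vF by (simp add: lift_def bl_def)
    show "edges (lift \<sigma> F) \<subseteq> edges (bl H k)"
    proof
      fix e assume "e \<in> edges (lift \<sigma> F)"
      then obtain f where f: "f \<in> edges F" "e = ?psi ` f" by (auto simp: lift_def)
      have "e \<subseteq> vG H k" using f eF psiV by blast
      moreover have "inj_on phi e" using f(2) by (auto simp: inj_on_def)
      moreover have "phi ` e \<in> edges H" using f eF phipsi by simp
      ultimately show "e \<in> edges (bl H k)" by (simp add: bl_def)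
    qed
    show "\<forall>e\<in>edges (lift \<sigma> F). e \<subseteq> verts (lift \<sigma> F)"
      using eF vF by (auto simp: lift_def)
  qed
  obtain h where h: "hg_iso Q F h" using iF by (auto simp: isomorphic_def)
  have "hg_iso Q (lift \<sigma> F) (?psi \<circ> h)"
    unfolding hg_iso_def
  proof
    have "bij_betw ?psi (verts F) (verts (lift \<sigma> F))"
      by (simp add: lift_def inj_on_imp_bij_betw[OF inj_psi])
    then show "bij_betw (?psi \<circ> h) (verts Q) (verts (lift \<sigma> F))"
      using h bij_betw_trans by (auto simp: hg_iso_def)
    have "(image (?psi \<circ> h)) ` edges Q = image ?psi ` (image h ` edges Q)"
      by (simp add: image_comp image_image)
    also have "\<dots> = edges (lift \<sigma> F)" using h by (simp add: hg_iso_def lift_def)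
    finally show "(image (?psi \<circ> h)) ` edges Q = edges (lift \<sigma> F)" .
  qed
  then have "isomorphic Q (lift \<sigma> F)" by (auto simp: isomorphic_def)
  with sub show ?thesis by (simp add: cps_def)
qed

lemma lift_inj:
  assumes I1: "finite I1" "card I1 = card (verts Q)" and F1: "F1 \<in> cps Q (induced H I1)"
    and s1: "\<sigma>1 \<in> PiE I1 (\<lambda>i. {..<k i})"
    and I2: "finite I2" "card I2 = card (verts Q)" and F2: "F2 \<in> cps Q (induced H I2)"
    and s2: "\<sigma>2 \<in> PiE I2 (\<lambda>i. {..<k i})"
    and eq: "lift \<sigma>1 F1 = lift \<sigma>2 F2"
  shows "I1 = I2 \<and> F1 = F2 \<and> \<sigma>1 = \<sigma>2"
proof -
  have v1: "verts F1 = I1" using cps_induced_verts[OF F1 I1] .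
  have v2: "verts F2 = I2" using cps_induced_verts[OF F2 I2] .
  have ve: "(\<lambda>i. prod_encode (i, \<sigma>1 i)) ` I1 = (\<lambda>i. prod_encode (i, \<sigma>2 i)) ` I2"
    using eq v1 v2 by (simp add: lift_def)
  then have "phi ` (\<lambda>i. prod_encode (i, \<sigma>1 i)) ` I1 = phi ` (\<lambda>i. prod_encode (i, \<sigma>2 i)) ` I2"
    by simp
  then have II: "I1 = I2" by (simp add: image_image)
  have ss: "\<sigma>1 = \<sigma>2"
  proof (rule PiE_ext[OF s1])
    show "\<sigma>2 \<in> PiE I1 (\<lambda>i. {..<k i})" using s2 II by simp
    fix i assume i: "i \<in> I1"
    then have "prod_encode (i, \<sigma>1 i) \<in> (\<lambda>i. prod_encode (i, \<sigma>2 i)) ` I2" using ve by blast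
    then show "\<sigma>1 i = \<sigma>2 i" by auto
  qed
  let ?psi = "\<lambda>i. prod_encode (i, \<sigma>1 i)"
  have e1: "edges F1 \<subseteq> Pow I1" using F1 v1 by (auto simp: cps_def subgraph_def)
  have e2: "edges F2 \<subseteq> Pow I1" using F2 v2 II by (auto simp: cps_def subgraph_def)
  have "image ?psi ` edges F1 = image ?psi ` edges F2" using eq ss by (simp add: lift_def)
  then have "edges F1 = edges F2"
    using inj_on_image_eq_iff[OF inj_on_image_Pow[OF inj_psi] e1 e2] by simp
  then have "F1 = F2" using v1 v2 II by (simp add: prod_eq_iff verts_def edges_def)
  with II ss show ?thesis by simp
qed


lemma finite_T: "finite I \<Longrightarrow> finite (Sigma (cps Q (induced H I)) (\<lambda>F. PiE I (\<lambda>i. {..<(k i::nat)})))"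
  by (intro finite_SigmaI finite_cps_induced finite_PiE) auto

lemma count_bl:
  assumes f: "finite (verts H)"
  shows "(\<Sum>I\<in>{I. I \<subseteq> verts H \<and> card I = card (verts Q)}. card (cps Q (induced H I)) * (\<Prod>i\<in>I. k i))
     \<le> card (cps Q (bl H k))"
proof -
  let ?S = "{I. I \<subseteq> verts H \<and> card I = card (verts Q)}"
  let ?T = "Sigma ?S (\<lambda>I. Sigma (cps Q (induced H I)) (\<lambda>F. PiE I (\<lambda>i. {..<k i})))"
  have fS: "finite ?S" using f by auto
  have fI: "\<And>I. I \<in> ?S \<Longrightarrow> finite I" using f by (auto intro: finite_subset)
  have cT: "card ?T = (\<Sum>I\<in>?S. card (cps Q (induced H I)) * (\<Prod>i\<in>I. k i))"
  proof -
    have "card ?T = (\<Sum>I\<in>?S. card (Sigma (cps Q (induced H I)) (\<lambda>F. PiE I (\<lambda>i. {..<k i}))))"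
      using fS fI finite_T by (intro card_SigmaI) blast+
    also have "\<dots> = (\<Sum>I\<in>?S. card (cps Q (induced H I)) * (\<Prod>i\<in>I. k i))"
    proof (rule sum.cong[OF refl])
      fix I assume I: "I \<in> ?S"
      have "card (Sigma (cps Q (induced H I)) (\<lambda>F. PiE I (\<lambda>i. {..<k i})))
          = (\<Sum>F\<in>cps Q (induced H I). card (PiE I (\<lambda>i. {..<k i})))"
        using fI[OF I] by (intro card_SigmaI finite_cps_induced) (auto intro: finite_PiE)
      also have "\<dots> = card (cps Q (induced H I)) * (\<Prod>i\<in>I. k i)"
      proof -
        have "card (PiE I (\<lambda>i. {..<k i})) = (\<Prod>i\<in>I. k i)"
          using card_PiE[OF fI[OF I], of "\<lambda>i. {..<k i}"] by simp
        then show ?thesis by (simp only: sum_constant) simp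
      qed
      finally show "card (Sigma (cps Q (induced H I)) (\<lambda>F. PiE I (\<lambda>i. {..<k i})))
          = card (cps Q (induced H I)) * (\<Prod>i\<in>I. k i)" .
    qed
    finally show ?thesis .
  qed
  have "card ?T \<le> card (cps Q (bl H k))"
  proof (rule card_inj_on_le[where f = "\<lambda>(I, F, \<sigma>). lift \<sigma> F"])
    show "(\<lambda>(I, F, \<sigma>). lift \<sigma> F) ` ?T \<subseteq> cps Q (bl H k)"
    proof (rule image_subsetI)
      fix x assume x: "x \<in> ?T"
      obtain I F \<sigma> where xe: "x = (I, F, \<sigma>)" by (cases x) auto
      have a: "(I, F, \<sigma>) \<in> ?T" using x xe by simp
      then have m: "I \<in> ?S" "F \<in> cps Q (induced H I)" "\<sigma> \<in> PiE I (\<lambda>i. {..<k i})"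
        by (simp_all only: mem_Sigma_iff)
      then have "I \<subseteq> verts H" "finite I" "card I = card (verts Q)" "F \<in> cps Q (induced H I)"
        "\<sigma> \<in> PiE I (\<lambda>i. {..<k i})" using m fI[OF m(1)] by blast+
      then have "lift \<sigma> F \<in> cps Q (bl H k)" by (rule lift_in)
      then show "(\<lambda>(I, F, \<sigma>). lift \<sigma> F) x \<in> cps Q (bl H k)" using xe by simp
    qed
    show "inj_on (\<lambda>(I, F, \<sigma>). lift \<sigma> F) ?T"
    proof (rule inj_onI)
      fix x y assume x: "x \<in> ?T" and y: "y \<in> ?T" and xy: "(\<lambda>(I, F, \<sigma>). lift \<sigma> F) x = (\<lambda>(I, F, \<sigma>). lift \<sigma> F) y"
      obtain I1 F1 s1 where xe: "x = (I1, F1, s1)" by (cases x) auto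
      obtain I2 F2 s2 where ye: "y = (I2, F2, s2)" by (cases y) auto
      have a: "(I1, F1, s1) \<in> ?T" "(I2, F2, s2) \<in> ?T" "lift s1 F1 = lift s2 F2"
        using x y xy xe ye by simp_all
      have m1: "I1 \<in> ?S" "F1 \<in> cps Q (induced H I1)" "s1 \<in> PiE I1 (\<lambda>i. {..<k i})"
        using a(1) by (simp_all only: mem_Sigma_iff)
      have b: "finite I1" "card I1 = card (verts Q)" "F1 \<in> cps Q (induced H I1)"
        "s1 \<in> PiE I1 (\<lambda>i. {..<k i})" using m1 fI[OF m1(1)] by blast+
      have m2: "I2 \<in> ?S" "F2 \<in> cps Q (induced H I2)" "s2 \<in> PiE I2 (\<lambda>i. {..<k i})"
        using a(2) by (simp_all only: mem_Sigma_iff)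
      have c: "finite I2" "card I2 = card (verts Q)" "F2 \<in> cps Q (induced H I2)"
        "s2 \<in> PiE I2 (\<lambda>i. {..<k i})" using m2 fI[OF m2(1)] by blast+
      have "I1 = I2 \<and> F1 = F2 \<and> s1 = s2"
        by (rule lift_inj[OF b c a(3)])
      then show "x = y" using xe ye by simp
    qed
    show "finite (cps Q (bl H k))"
      using f by (intro finite_cps) (simp add: bl_def vG_def)
  qed
  then show ?thesis using cT by simp
qed


context hprop begin

lemma poly_bl:
  assumes H: "H \<in> P" and k: "\<forall>i\<in>verts H. 1 \<le> k i"
  shows "poly_QH Q H (\<lambda>i. real (k i)) \<le> fact (card (verts Q)) * real (ex_num Q P (\<Sum>i\<in>verts H. k i))"
proof -
  let ?s = "card (verts Q)"
  let ?S = "{I. I \<subseteq> verts H \<and> card I = ?s}"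
  have f: "finite (verts H)" using fin[OF H] .
  have "poly_QH Q H (\<lambda>i. real (k i)) = fact ?s * real (\<Sum>I\<in>?S. card (cps Q (induced H I)) * (\<Prod>i\<in>I. k i))"
    by (simp add: poly_QH_def num_copies_cps)
  also have "\<dots> \<le> fact ?s * real (card (cps Q (bl H k)))"
  proof -
    have c: "real (\<Sum>I\<in>?S. card (cps Q (induced H I)) * (\<Prod>i\<in>I. k i)) \<le> real (card (cps Q (bl H k)))"
      by (rule of_nat_mono[OF count_bl[OF f, where Q=Q and k=k]])
    show ?thesis by (rule mult_left_mono[OF c]) simp
  qed
  also have "\<dots> \<le> fact ?s * real (ex_num Q P (\<Sum>i\<in>verts H. k i))"
  proof -
    have "bl H k \<in> P" using bl_in[OF H k] .
    moreover have "card (verts (bl H k)) = (\<Sum>i\<in>verts H. k i)"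
      using card_vG[OF f] by (simp add: bl_def)
    ultimately have "card (cps Q (bl H k)) \<le> ex_num Q P (\<Sum>i\<in>verts H. k i)" by (rule ex_ge)
    then show ?thesis by (intro mult_left_mono) auto
  qed
  finally show ?thesis .
qed

definition bseq :: "hg \<Rightarrow> nat \<Rightarrow> real" where
  "bseq Q n = fact (card (verts Q)) * real (ex_num Q P n) / real n ^ card (verts Q)"

lemma bseq_nonneg: "0 \<le> bseq Q n"
  by (simp add: bseq_def)

lemma fact_choose_le: "fact s * real (n choose s) \<le> real n ^ s"
proof -
  have "(n choose s) * fact s \<le> n ^ s" by (rule binomial_fact_pow)
  then have "real ((n choose s) * fact s) \<le> real (n ^ s)" by linarith
  then show ?thesis by (simp add: mult.commute)
qed

end

definition Kc :: "nat \<Rightarrow> nat" where "Kc s = 2 ^ s * 2 ^ (2 ^ s)"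

lemma aux_bound:
  fixes A C K N f :: real
  assumes "0 < N" "A \<le> C * K" "f * C \<le> N" "0 \<le> f" "0 \<le> K"
  shows "f * A / N \<le> K"
proof -
  have "f * A \<le> f * (C * K)" using assms by (intro mult_left_mono) auto
  also have "\<dots> = (f * C) * K" by (simp add: mult.assoc)
  also have "\<dots> \<le> N * K" using assms by (intro mult_right_mono) auto
  finally show ?thesis using assms(1) by (simp add: divide_le_eq mult.commute)
qed

context hprop begin

lemma ex_le_choose:
  "ex_num Q P n \<le> (n choose card (verts Q)) * Kc (card (verts Q))"
proof -
  let ?s = "card (verts Q)"
  obtain H where H: "H \<in> P" "card (verts H) = n" "card (cps Q H) = ex_num Q P n"
    using ex_attained by blast
  have f: "finite (verts H)" using fin[OF H(1)] .
  let ?S = "{I. I \<subseteq> verts H \<and> card I = ?s}"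
  have "ex_num Q P n \<le> (\<Sum>I\<in>?S. card (cps Q (induced H I)))"
    using N_le_sum[OF f, where Q=Q] H(3) by simp
  also have "\<dots> \<le> card ?S * Kc ?s"
  proof -
    have bnd: "\<And>I. I \<in> ?S \<Longrightarrow> card (cps Q (induced H I)) \<le> Kc ?s"
      unfolding Kc_def using f by (auto intro!: cps_induced_le intro: finite_subset)
    show ?thesis using sum_bounded_above[of ?S _ "Kc ?s", OF bnd] by simp
  qed
  also have "card ?S = n choose ?s" using n_subsets[OF f] H(2) by simp
  finally show ?thesis .
qed

lemma bseq_bound: "bseq Q n \<le> real (Kc (card (verts Q)))"
proof (cases "0 < real n ^ card (verts Q)")
  case True
  have e0: "real (ex_num Q P n) \<le> real ((n choose card (verts Q)) * Kc (card (verts Q)))"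
    by (rule of_nat_mono[OF ex_le_choose])
  show ?thesis unfolding bseq_def
    by (rule aux_bound[OF True _ fact_choose_le]) (use e0 in \<open>simp_all only: of_nat_mult of_nat_0_le_iff fact_ge_zero\<close>)
next
  case False
  then have "real n ^ card (verts Q) = 0" by (metis less_le zero_le_power of_nat_0_le_iff)
  then have "bseq Q n = 0" unfolding bseq_def by simp
  then show ?thesis by simp
qed

end

context hprop begin
lemma bseq_grow:
  assumes n: "1 \<le> n" and nm: "n \<le> m"
  shows "bseq Q n * (1 - real n / real m) ^ card (verts Q) \<le> bseq Q m"
proof -
  let ?s = "card (verts Q)"
  define q where "q = m div n"
  have "0 < m div n" using n nm by (simp add: div_greater_zero_iff)
  then have q1: "1 \<le> q" unfolding q_def by linarith
  have qn: "q * n \<le> m" by (simp add: q_def)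
  have qn2: "real m - real n \<le> real q * real n"
  proof -
    have "m = q * n + m mod n" by (simp add: q_def)
    moreover have "m mod n < n" using n by simp
    ultimately have "m \<le> q * n + n" by linarith
    then show ?thesis by (metis of_nat_add of_nat_le_iff of_nat_mult diff_le_eq)
  qed
  obtain H where H: "H \<in> P" "card (verts H) = n" "card (cps Q H) = ex_num Q P n"
    using ex_attained by blast
  have f: "finite (verts H)" using fin[OF H(1)] .
  let ?S = "{I. I \<subseteq> verts H \<and> card I = ?s}"
  have "poly_QH Q H (\<lambda>i. real q) = fact ?s * (\<Sum>I\<in>?S. real (card (cps Q (induced H I))) * real q ^ ?s)"
    unfolding poly_QH_def num_copies_cps
    by (intro arg_cong[where f = "\<lambda>x. fact ?s * x"] sum.cong) auto
  also have "\<dots> = fact ?s * real q ^ ?s * real (\<Sum>I\<in>?S. card (cps Q (induced H I)))"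
    by (simp add: sum_distrib_left algebra_simps)
  finally have 0: "poly_QH Q H (\<lambda>i. real q) = fact ?s * real q ^ ?s * real (\<Sum>I\<in>?S. card (cps Q (induced H I)))" .
  have h: "ex_num Q P n \<le> (\<Sum>I\<in>?S. card (cps Q (induced H I)))"
    using N_le_sum[OF f, where Q=Q] H(3) by simp
  have "fact ?s * real q ^ ?s * real (ex_num Q P n) \<le> fact ?s * real q ^ ?s * real (\<Sum>I\<in>?S. card (cps Q (induced H I)))"
    by (rule mult_left_mono[OF of_nat_mono[OF h]]) simp
  then have 1: "fact ?s * real q ^ ?s * real (ex_num Q P n) \<le> poly_QH Q H (\<lambda>i. real q)" using 0 by simp
  have "poly_QH Q H (\<lambda>i. real q) \<le> fact ?s * real (ex_num Q P (\<Sum>i\<in>verts H. q))"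
    using poly_bl[OF H(1), where k="\<lambda>i. q" and Q=Q] q1 by simp
  also have "(\<Sum>i\<in>verts H. q) = q * n" using H(2) by simp
  also have "fact ?s * real (ex_num Q P (q * n)) \<le> fact ?s * real (ex_num Q P m)"
    using ex_mono[OF qn, where Q=Q] by (intro mult_left_mono) auto
  finally have key: "fact ?s * real q ^ ?s * real (ex_num Q P n) \<le> fact ?s * real (ex_num Q P m)"
    using 1 by linarith
  have mpos: "real m > 0" using n nm by simp
  have npos: "real n > 0" using n by simp
  have "bseq Q n * (1 - real n / real m) ^ ?s \<le> bseq Q n * (real q * real n / real m) ^ ?s"
  proof (intro mult_left_mono power_mono bseq_nonneg)
    have "1 - real n / real m = (real m - real n) / real m" using mpos by (simp add: diff_divide_distrib)
    also have "\<dots> \<le> real q * real n / real m" using qn2 mpos by (intro divide_right_mono) auto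
    finally show "1 - real n / real m \<le> real q * real n / real m" .
    show "0 \<le> 1 - real n / real m" using nm mpos by simp
  qed
  also have "bseq Q n * (real q * real n / real m) ^ ?s = fact ?s * real q ^ ?s * real (ex_num Q P n) / real m ^ ?s"
  proof -
    have nn: "real n ^ ?s \<noteq> 0" and mm: "real m ^ ?s \<noteq> 0" using npos mpos by auto
    have "bseq Q n * (real q * real n / real m) ^ ?s
        = (fact ?s * real (ex_num Q P n) / real n ^ ?s) * (real q ^ ?s * real n ^ ?s / real m ^ ?s)"
      by (simp add: bseq_def power_divide power_mult_distrib)
    also have "\<dots> = fact ?s * real q ^ ?s * real (ex_num Q P n) / real m ^ ?s"
      using nn mm n by (simp add: divide_simps)
    finally show ?thesis .
  qed
  also have "\<dots> \<le> fact ?s * real (ex_num Q P m) / real m ^ ?s"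
    using key mpos by (intro divide_right_mono) auto
  also have "\<dots> = bseq Q m" by (simp add: bseq_def)
  finally show ?thesis .
qed

end

lemma fact_choose_ge:
  assumes "s \<le> n"
  shows "(n - s) ^ s \<le> fact s * (n choose s)"
proof -
  have fpos: "0 < (fact (n - s) :: nat)" by simp
  have e1: "fact s * fact (n - s) * (n choose s) = (fact n :: nat)"
    by (rule binomial_fact_lemma[OF assms])
  have e2: "(fact n :: nat) = fact (n - s) * \<Prod>{Suc (n - s)..n}"
    by (rule fact_eq_fact_times) simp
  have "fact (n - s) * (fact s * (n choose s)) = fact (n - s) * \<Prod>{Suc (n - s)..n}"
    using e1 e2 by (simp only: mult.commute mult.left_commute)
  then have eq: "fact s * (n choose s) = \<Prod>{Suc (n - s)..n}"
    using fpos by simp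
  have c: "card {Suc (n - s)..n} = s" using assms by simp
  have "(n - s) ^ s = (\<Prod>i\<in>{Suc (n - s)..n}. n - s)"
    by (simp only: prod_constant c)
  also have "\<dots> \<le> \<Prod>{Suc (n - s)..n}"
    by (rule prod_mono) auto
  finally show ?thesis using eq by simp
qed

lemma aux_ratio:
  fixes f E C N :: real
  assumes "0 < f" "0 < C" "0 < N"
  shows "(f * E / N) / (f * C / N) = E / C"
  using assms by (simp add: field_simps)

lemma lim_aux: "(\<lambda>m. c * (1 - a / real m) ^ k) \<longlonglongrightarrow> (c::real)"
proof -
  have "(\<lambda>m. c * (1 - a / real m) ^ k) \<longlonglongrightarrow> c * (1 - 0) ^ k"
    by (intro tendsto_intros lim_const_over_n)
  then show ?thesis by simp
qed

context hprop begin

definition cseq :: "hg \<Rightarrow> nat \<Rightarrow> real" where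
  "cseq Q n = fact (card (verts Q)) * real (n choose card (verts Q)) / real n ^ card (verts Q)"

lemma cseq_lim: "cseq Q \<longlonglongrightarrow> 1"
proof (rule tendsto_sandwich[where f = "\<lambda>n. 1 * (1 - real (card (verts Q)) / real n) ^ card (verts Q)"
      and h = "\<lambda>n. 1"])
  let ?s = "card (verts Q)"
  show "\<forall>\<^sub>F n in sequentially. 1 * (1 - real ?s / real n) ^ ?s \<le> cseq Q n"
    using eventually_ge_at_top[of "?s + 1"]
  proof eventually_elim
    case (elim n)
    then have sn: "?s \<le> n" and npos: "real n > 0" by auto
    have "1 * (1 - real ?s / real n) ^ ?s = (real (n - ?s) / real n) ^ ?s"
      using sn npos by (simp add: of_nat_diff diff_divide_distrib)
    also have "\<dots> = real ((n - ?s) ^ ?s) / real n ^ ?s" by (simp add: power_divide)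
    also have "\<dots> \<le> real (fact ?s * (n choose ?s)) / real n ^ ?s"
      using fact_choose_ge[OF sn] npos by (intro divide_right_mono of_nat_mono) auto
    also have "\<dots> = cseq Q n" by (simp add: cseq_def)
    finally show ?case .
  qed
  show "\<forall>\<^sub>F n in sequentially. cseq Q n \<le> 1"
    using eventually_ge_at_top[of "1::nat"]
  proof eventually_elim
    case (elim n)
    then have "real n ^ ?s > 0" by simp
    then show ?case using fact_choose_le[of ?s n] by (simp add: cseq_def divide_le_eq)
  qed
  show "(\<lambda>n. 1 * (1 - real ?s / real n) ^ ?s) \<longlonglongrightarrow> 1"
    by (rule lim_aux)
  show "(\<lambda>n. 1::real) \<longlonglongrightarrow> 1" by simp
qed

lemma bseq_lim:
  assumes s1: "1 \<le> card (verts Q)"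
  shows "bseq Q \<longlonglongrightarrow> Sup (range (bseq Q))"
proof (rule order_tendstoI)
  let ?s = "card (verts Q)"
  let ?L = "Sup (range (bseq Q))"
  have bdd: "bdd_above (range (bseq Q))"
    by (rule bdd_aboveI2[where M = "real (Kc (card (verts Q)))"]) (rule bseq_bound)
  have b0: "bseq Q 0 = 0" using s1 by (simp add: bseq_def power_0_left)
  fix a assume a: "a < ?L"
  then obtain n where n: "a < bseq Q n" using less_cSup_iff[OF _ bdd] by auto
  show "\<forall>\<^sub>F m in sequentially. a < bseq Q m"
  proof (cases "n = 0")
    case True
    then have "a < 0" using n b0 by simp
    show ?thesis
    proof (intro always_eventually allI)
      fix m show "a < bseq Q m" using \<open>a < 0\<close> bseq_nonneg[of Q m] by linarith
    qed
  next
    case False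
    have lim: "(\<lambda>m. bseq Q n * (1 - real n / real m) ^ ?s) \<longlonglongrightarrow> bseq Q n"
      by (rule lim_aux)
    have ev: "\<forall>\<^sub>F m in sequentially. a < bseq Q n * (1 - real n / real m) ^ ?s"
      using order_tendstoD(1)[OF lim n] .
    show ?thesis using ev eventually_ge_at_top[of n]
    proof eventually_elim
      case (elim m)
      then show ?case using bseq_grow[of n m Q] False by linarith
    qed
  qed
next
  fix a assume a: "Sup (range (bseq Q)) < a"
  have bdd: "bdd_above (range (bseq Q))"
    by (rule bdd_aboveI2[where M = "real (Kc (card (verts Q)))"]) (rule bseq_bound)
  have "\<And>m. bseq Q m \<le> Sup (range (bseq Q))" using bdd by (auto intro: cSup_upper)
  then show "\<forall>\<^sub>F m in sequentially. bseq Q m < a" using a by (intro always_eventually) (auto intro: le_less_trans)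
qed

lemma pi_lim:
  assumes s1: "1 \<le> card (verts Q)"
  shows "pi_seq Q P \<longlonglongrightarrow> Sup (range (bseq Q))"
proof -
  have "(\<lambda>n. bseq Q n / cseq Q n) \<longlonglongrightarrow> Sup (range (bseq Q)) / 1"
    by (rule tendsto_divide[OF bseq_lim[OF s1] cseq_lim]) simp
  moreover have "\<forall>\<^sub>F n in sequentially. bseq Q n / cseq Q n = pi_seq Q P n"
    using eventually_ge_at_top[of "card (verts Q) + 1"]
  proof eventually_elim
    case (elim n)
    let ?s = "card (verts Q)"
    have np: "real n ^ ?s > 0" using elim by simp
    have cp: "real (n choose ?s) > 0" using elim by simp
    have fp: "(fact ?s :: real) > 0" by simp
    show ?case unfolding bseq_def cseq_def pi_seq_def by (rule aux_ratio[OF fp cp np])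
  qed
  ultimately show ?thesis by (simp add: tendsto_cong)
qed

end

lemma jensen_pos:
  fixes y :: "nat \<Rightarrow> real" and p :: real
  assumes fV: "finite V" and ne: "V \<noteq> {}" and pos: "\<And>i. i \<in> V \<Longrightarrow> 0 < y i"
    and p: "1 \<le> p" and sp: "(\<Sum>i\<in>V. y i powr p) = 1"
  shows "(\<Sum>i\<in>V. y i) \<le> real (card V) powr (1 - 1 / p)"
proof -
  let ?n = "real (card V)"
  let ?S = "\<Sum>i\<in>V. y i"
  have npos: "0 < ?n" using fV ne by (simp add: card_gt_0_iff)
  have Spos: "0 < ?S" using fV ne pos by (intro sum_pos) auto
  have "(\<Sum>i\<in>V. (1 / ?n) *\<^sub>R y i) powr p \<le> (\<Sum>i\<in>V. (1 / ?n) * y i powr p)"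
    by (rule convex_on_sum[OF fV ne powr_convex[OF p], where a = "\<lambda>i. 1 / ?n"])
       (use npos pos in auto)
  also have "\<dots> = 1 / ?n" using sp by (simp add: sum_divide_distrib[symmetric])
  finally have J: "(?S / ?n) powr p \<le> 1 / ?n"
    by (simp add: sum_divide_distrib[symmetric] mult.commute)
  have "?S / ?n = ((?S / ?n) powr p) powr (1 / p)"
    using p Spos npos by (simp add: powr_powr)
  also have "\<dots> \<le> (1 / ?n) powr (1 / p)"
    using J p Spos npos by (intro powr_mono2) auto
  finally have "?S / ?n \<le> (1 / ?n) powr (1 / p)" .
  then have "?S \<le> ?n * (1 / ?n) powr (1 / p)" using npos by (simp add: divide_le_eq mult.commute)
  also have "\<dots> = ?n powr 1 / ?n powr (1 / p)"
    using npos by (simp add: powr_divide)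
  also have "\<dots> = ?n powr (1 - 1 / p)"
    by (simp only: powr_diff)
  finally show ?thesis .
qed

lemma jensen:
  fixes y :: "nat \<Rightarrow> real" and p :: real
  assumes fV: "finite V" and nn: "\<And>i. i \<in> V \<Longrightarrow> 0 \<le> y i"
    and p: "1 \<le> p" and sp: "(\<Sum>i\<in>V. y i powr p) = 1"
  shows "(\<Sum>i\<in>V. y i) \<le> real (card V) powr (1 - 1 / p)"
proof -
  let ?W = "{i \<in> V. 0 < y i}"
  have fW: "finite ?W" using fV by simp
  have z: "\<And>i. i \<in> V - ?W \<Longrightarrow> y i = 0" using nn by force
  have s1: "(\<Sum>i\<in>V. y i) = (\<Sum>i\<in>?W. y i)"
    using fV z by (intro sum.mono_neutral_right) auto
  have s2: "(\<Sum>i\<in>V. y i powr p) = (\<Sum>i\<in>?W. y i powr p)"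
    using fV z by (intro sum.mono_neutral_right) auto
  have neW: "?W \<noteq> {}"
  proof
    assume e: "?W = {}"
    have "(\<Sum>i\<in>?W. y i powr p) = 0" unfolding e by simp
    then show False using s2 sp by simp
  qed
  have "(\<Sum>i\<in>?W. y i) \<le> real (card ?W) powr (1 - 1 / p)"
    using jensen_pos[OF fW neW _ p] s2 sp by auto
  also have "\<dots> \<le> real (card V) powr (1 - 1 / p)"
    using p fV by (intro powr_mono2) (auto intro: card_mono simp: field_simps)
  finally show ?thesis using s1 by simp
qed

lemma pnorm_sum:
  assumes "pnorm p V x = 1" "1 \<le> p"
  shows "(\<Sum>i\<in>V. \<bar>x i\<bar> powr p) = 1"
proof -
  let ?T = "\<Sum>i\<in>V. \<bar>x i\<bar> powr p"
  have T0: "0 \<le> ?T" by (intro sum_nonneg) simp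
  have "?T = ?T powr 1" using T0 by (simp add: powr_one)
  also have "\<dots> = (?T powr (1 / p)) powr p" using assms(2) by (simp add: powr_powr)
  also have "?T powr (1 / p) = 1" using assms(1) by (simp add: pnorm_def)
  finally show ?thesis by simp
qed


lemma poly_abs: "poly_QH Q H x \<le> poly_QH Q H (\<lambda>i. \<bar>x i\<bar>)"
  unfolding poly_QH_def
proof (rule mult_left_mono[OF sum_mono])
  fix I
  have "(\<Prod>i\<in>I. x i) \<le> \<bar>\<Prod>i\<in>I. x i\<bar>" by simp
  also have "\<dots> = (\<Prod>i\<in>I. \<bar>x i\<bar>)" by (rule abs_prod)
  finally show "real (num_copies Q (induced H I)) * (\<Prod>i\<in>I. x i)
      \<le> real (num_copies Q (induced H I)) * (\<Prod>i\<in>I. \<bar>x i\<bar>)"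
    by (rule mult_left_mono) auto
qed simp

lemma poly_mono:
  assumes "\<And>i. i \<in> verts H \<Longrightarrow> 0 \<le> y i \<and> y i \<le> z i"
  shows "poly_QH Q H y \<le> poly_QH Q H z"
  unfolding poly_QH_def
proof (rule mult_left_mono[OF sum_mono])
  fix I assume "I \<in> {I. I \<subseteq> verts H \<and> card I = card (verts Q)}"
  then have "I \<subseteq> verts H" by simp
  then have "(\<Prod>i\<in>I. y i) \<le> (\<Prod>i\<in>I. z i)" using assms by (intro prod_mono) auto
  then show "real (num_copies Q (induced H I)) * (\<Prod>i\<in>I. y i)
      \<le> real (num_copies Q (induced H I)) * (\<Prod>i\<in>I. z i)"
    by (rule mult_left_mono) auto
qed simp

lemma poly_scale:
  fixes c :: real
  shows "poly_QH Q H (\<lambda>i. z i / c) = poly_QH Q H z / c ^ card (verts Q)"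
proof -
  let ?S = "{I. I \<subseteq> verts H \<and> card I = card (verts Q)}"
  have "poly_QH Q H (\<lambda>i. z i / c) = fact (card (verts Q)) *
      (\<Sum>I\<in>?S. real (num_copies Q (induced H I)) * (\<Prod>i\<in>I. z i) / c ^ card (verts Q))"
    unfolding poly_QH_def
  proof (intro arg_cong[where f = "\<lambda>t. fact (card (verts Q)) * t"] sum.cong refl)
    fix I assume "I \<in> ?S"
    then have cI: "card I = card (verts Q)" by simp
    have "(\<Prod>i\<in>I. z i / c) = (\<Prod>i\<in>I. z i) / (\<Prod>i\<in>I. c)" by (rule prod_dividef)
    also have "(\<Prod>i\<in>I. c) = c ^ card (verts Q)" using cI by simp
    finally show "real (num_copies Q (induced H I)) * (\<Prod>i\<in>I. z i / c)
        = real (num_copies Q (induced H I)) * (\<Prod>i\<in>I. z i) / c ^ card (verts Q)" by simp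
  qed
  also have "\<dots> = poly_QH Q H z / c ^ card (verts Q)"
    unfolding poly_QH_def by (simp add: sum_divide_distrib[symmetric])
  finally show ?thesis .
qed

lemma poly_const:
  "poly_QH Q H (\<lambda>i. c) = fact (card (verts Q)) * c ^ card (verts Q) *
     (\<Sum>I\<in>{I. I \<subseteq> verts H \<and> card I = card (verts Q)}. real (num_copies Q (induced H I)))"
proof -
  let ?S = "{I. I \<subseteq> verts H \<and> card I = card (verts Q)}"
  have "poly_QH Q H (\<lambda>i. c) = fact (card (verts Q)) *
      (\<Sum>I\<in>?S. real (num_copies Q (induced H I)) * c ^ card (verts Q))"
    unfolding poly_QH_def
    by (intro arg_cong[where f = "\<lambda>t. fact (card (verts Q)) * t"] sum.cong refl) auto
  also have "\<dots> = fact (card (verts Q)) * c ^ card (verts Q) *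
     (\<Sum>I\<in>?S. real (num_copies Q (induced H I)))"
    by (simp add: sum_distrib_left algebra_simps)
  finally show ?thesis .
qed


lemma ceil_bounds:
  fixes t :: real assumes "0 \<le> t"
  shows "t \<le> real (nat \<lceil>t\<rceil> + 1)" "real (nat \<lceil>t\<rceil> + 1) \<le> t + 2"
proof -
  have a: "real (nat \<lceil>t\<rceil>) = real_of_int \<lceil>t\<rceil>" using assms by simp
  have b: "t \<le> real_of_int \<lceil>t\<rceil>" by (rule le_of_int_ceiling)
  have c: "real_of_int \<lceil>t\<rceil> \<le> t + 1" by (rule of_int_ceiling_le_add_one)
  have d: "real (nat \<lceil>t\<rceil> + 1) = real (nat \<lceil>t\<rceil>) + 1" by simp
  show "t \<le> real (nat \<lceil>t\<rceil> + 1)" using a b d by linarith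
  show "real (nat \<lceil>t\<rceil> + 1) \<le> t + 2" using a c d by linarith
qed

context hprop begin

lemma poly_le_L:
  assumes s1: "1 \<le> card (verts Q)" and H: "H \<in> P" and n1: "1 \<le> card (verts H)"
    and y0: "\<And>i. i \<in> verts H \<Longrightarrow> 0 \<le> y i" and Spos: "0 < (\<Sum>i\<in>verts H. y i)"
  shows "poly_QH Q H y \<le> Sup (range (bseq Q)) * (\<Sum>i\<in>verts H. y i) ^ card (verts Q)"
proof -
  let ?s = "card (verts Q)"
  let ?V = "verts H"
  let ?n = "card (verts H)"
  let ?S = "\<Sum>i\<in>verts H. y i"
  let ?L = "Sup (range (bseq Q))"
  define k where "k j i = nat \<lceil>real j * y i\<rceil> + 1" for j i
  define m where "m j = (\<Sum>i\<in>?V. k j i)" for j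
  have fV: "finite ?V" using fin[OF H] .
  have kb: "\<And>j i. i \<in> ?V \<Longrightarrow> real j * y i \<le> real (k j i) \<and> real (k j i) \<le> real j * y i + 2"
    unfolding k_def using ceil_bounds y0 by (simp add: ceil_bounds)
  have mlow: "real j * ?S \<le> real (m j)" for j
  proof -
    have "real j * ?S = (\<Sum>i\<in>?V. real j * y i)" by (simp add: sum_distrib_left)
    also have "\<dots> \<le> (\<Sum>i\<in>?V. real (k j i))" using kb by (intro sum_mono) auto
    also have "\<dots> = real (m j)" by (simp add: m_def)
    finally show ?thesis .
  qed
  have mup: "real (m j) \<le> real j * ?S + 2 * real ?n" for j
  proof -
    have "real (m j) = (\<Sum>i\<in>?V. real (k j i))" by (simp add: m_def)
    also have "\<dots> \<le> (\<Sum>i\<in>?V. real j * y i + 2)" using kb by (intro sum_mono) auto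
    also have "\<dots> = real j * ?S + 2 * real ?n" by (simp add: sum.distrib sum_distrib_left)
    finally show ?thesis .
  qed
  have mpos: "1 \<le> m j" for j
  proof -
    obtain i where "i \<in> ?V" using n1 by (metis card.empty ex_in_conv not_one_le_zero)
    then have "1 \<le> k j i" "k j i \<le> m j" unfolding m_def k_def using fV
      by (auto intro: member_le_sum)
    then show ?thesis by simp
  qed
  have step: "poly_QH Q H y \<le> bseq Q (m j) * (?S + 2 * real ?n / real j) ^ ?s" if j1: "1 \<le> j" for j
  proof -
    have jpos: "0 < real j" using j1 by simp
    have "poly_QH Q H y \<le> poly_QH Q H (\<lambda>i. real (k j i) / real j)"
    proof (rule poly_mono)
      fix i assume "i \<in> ?V"
      then show "0 \<le> y i \<and> y i \<le> real (k j i) / real j"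
        using kb[of i j] y0 jpos by (simp add: le_divide_eq mult.commute)
    qed
    also have "\<dots> = poly_QH Q H (\<lambda>i. real (k j i)) / real j ^ ?s" by (rule poly_scale)
    also have "\<dots> \<le> fact ?s * real (ex_num Q P (m j)) / real j ^ ?s"
      unfolding m_def using poly_bl[OF H, where k = "k j" and Q = Q] jpos
      by (intro divide_right_mono) (auto simp: k_def)
    also have "fact ?s * real (ex_num Q P (m j)) = bseq Q (m j) * real (m j) ^ ?s"
      using mpos[of j] by (simp add: bseq_def)
    also have "bseq Q (m j) * real (m j) ^ ?s / real j ^ ?s = bseq Q (m j) * (real (m j) / real j) ^ ?s"
      by (simp add: power_divide)
    also have "\<dots> \<le> bseq Q (m j) * (?S + 2 * real ?n / real j) ^ ?s"
    proof (rule mult_left_mono[OF power_mono bseq_nonneg])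
      show "real (m j) / real j \<le> ?S + 2 * real ?n / real j"
        using mup[of j] jpos by (simp add: divide_le_eq add_divide_distrib algebra_simps)
      show "0 \<le> real (m j) / real j" by simp
    qed
    finally show ?thesis .
  qed
  have mlim: "filterlim m at_top sequentially"
    unfolding filterlim_at_top
  proof
    fix Z :: nat
    show "\<forall>\<^sub>F j in sequentially. Z \<le> m j"
      using eventually_ge_at_top[of "nat \<lceil>real Z / ?S\<rceil>"]
    proof eventually_elim
      case (elim j)
      have "real Z / ?S \<le> real j" using elim by linarith
      then have "real Z \<le> real j * ?S" using Spos by (simp add: divide_le_eq)
      then have "real Z \<le> real (m j)" using mlow[of j] by linarith
      then show ?case by simp
    qed
  qed
  have lim1: "(\<lambda>j. bseq Q (m j)) \<longlonglongrightarrow> ?L"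
    using filterlim_compose[OF bseq_lim[OF s1] mlim] by simp
  have lim2: "(\<lambda>j. (?S + 2 * real ?n / real j) ^ ?s) \<longlonglongrightarrow> (?S + 0) ^ ?s"
    by (intro tendsto_intros lim_const_over_n)
  have lim: "(\<lambda>j. bseq Q (m j) * (?S + 2 * real ?n / real j) ^ ?s) \<longlonglongrightarrow> ?L * ?S ^ ?s"
    using tendsto_mult[OF lim1 lim2] by simp
  show ?thesis
    by (rule LIMSEQ_le_const[OF lim]) (use step in auto)
qed

end

context hprop begin

lemma L_nonneg: "0 \<le> Sup (range (bseq Q))"
proof -
  have bdd: "bdd_above (range (bseq Q))"
    by (rule bdd_aboveI2[where M = "real (Kc (card (verts Q)))"]) (rule bseq_bound)
  have "bseq Q 0 \<le> Sup (range (bseq Q))" using bdd by (intro cSup_upper) auto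
  then show ?thesis using bseq_nonneg[of Q 0] by linarith
qed

lemma poly_upper:
  assumes s1: "1 \<le> card (verts Q)" and H: "H \<in> P" and n1: "1 \<le> card (verts H)"
    and p: "1 \<le> p" and x: "pnorm p (verts H) x = 1"
  shows "poly_QH Q H x \<le> Sup (range (bseq Q)) *
     real (card (verts H)) powr (real (card (verts Q)) - real (card (verts Q)) / p)"
proof -
  let ?s = "card (verts Q)"
  let ?n = "real (card (verts H))"
  let ?L = "Sup (range (bseq Q))"
  let ?y = "\<lambda>i. \<bar>x i\<bar>"
  let ?S = "\<Sum>i\<in>verts H. \<bar>x i\<bar>"
  have fV: "finite (verts H)" using fin[OF H] .
  have npos: "0 < ?n" using n1 by simp
  have sp: "(\<Sum>i\<in>verts H. \<bar>x i\<bar> powr p) = 1" by (rule pnorm_sum[OF x p])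
  have Spos: "0 < ?S"
  proof (rule ccontr)
    assume "\<not> 0 < ?S"
    moreover have "0 \<le> ?S" by (intro sum_nonneg) simp
    ultimately have "?S = 0" by linarith
    then have "\<forall>i\<in>verts H. \<bar>x i\<bar> = 0" using sum_nonneg_eq_0_iff[OF fV, of ?y] by (simp del: abs_eq_0)
    then have "(\<Sum>i\<in>verts H. \<bar>x i\<bar> powr p) = 0" by simp
    then show False using sp by simp
  qed
  have J: "?S \<le> ?n powr (1 - 1 / p)" by (rule jensen[OF fV _ p sp]) simp
  have "poly_QH Q H x \<le> poly_QH Q H ?y" by (rule poly_abs)
  also have "\<dots> \<le> ?L * ?S ^ ?s" by (rule poly_le_L[OF s1 H n1 _ Spos]) simp
  also have "\<dots> \<le> ?L * (?n powr (1 - 1 / p)) ^ ?s"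
    using J Spos L_nonneg by (intro mult_left_mono power_mono) auto
  also have "(?n powr (1 - 1 / p)) ^ ?s = ?n powr (real ?s * (1 - 1 / p))"
    using npos by (simp add: powr_power)
  also have "real ?s * (1 - 1 / p) = real ?s - real ?s / p" by (simp add: algebra_simps)
  finally show ?thesis .
qed

lemma poly_lower:
  assumes H: "H \<in> P" and n1: "1 \<le> card (verts H)" and p: "1 \<le> p"
  defines "u \<equiv> \<lambda>i::nat. real (card (verts H)) powr (- 1 / p)"
  shows "pnorm p (verts H) u = 1"
    and "fact (card (verts Q)) * real (card (verts H)) powr (- real (card (verts Q)) / p) * real (num_copies Q H)
         \<le> poly_QH Q H u"
proof -
  let ?s = "card (verts Q)"
  let ?n = "real (card (verts H))"
  have fV: "finite (verts H)" using fin[OF H] .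
  have npos: "0 < ?n" using n1 by simp
  have pp: "0 < p" using p by simp
  have "(\<Sum>i\<in>verts H. \<bar>u i\<bar> powr p) = ?n * (?n powr (- 1 / p)) powr p"
    unfolding u_def by simp
  also have "(?n powr (- 1 / p)) powr p = ?n powr (- 1)" using pp by (simp add: powr_powr)
  also have "?n * ?n powr (- 1) = 1" using npos by (simp add: powr_minus)
  finally show "pnorm p (verts H) u = 1" by (simp add: pnorm_def)
  have "poly_QH Q H u = fact ?s * (?n powr (- 1 / p)) ^ ?s *
     (\<Sum>I\<in>{I. I \<subseteq> verts H \<and> card I = ?s}. real (num_copies Q (induced H I)))"
    unfolding u_def by (rule poly_const)
  also have "(?n powr (- 1 / p)) ^ ?s = ?n powr (- real ?s / p)"
    using npos by (simp add: powr_power)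
  finally have eq: "poly_QH Q H u = fact ?s * ?n powr (- real ?s / p) *
     (\<Sum>I\<in>{I. I \<subseteq> verts H \<and> card I = ?s}. real (num_copies Q (induced H I)))" .
  have h: "num_copies Q H \<le> (\<Sum>I\<in>{I. I \<subseteq> verts H \<and> card I = ?s}. num_copies Q (induced H I))"
    unfolding num_copies_cps by (rule N_le_sum[OF fV])
  have "real (num_copies Q H) \<le> (\<Sum>I\<in>{I. I \<subseteq> verts H \<and> card I = ?s}. real (num_copies Q (induced H I)))"
    using of_nat_mono[OF h] by simp
  then show "fact ?s * ?n powr (- real ?s / p) * real (num_copies Q H) \<le> poly_QH Q H u"
    unfolding eq by (rule mult_left_mono) simp
qed

lemma lagr_seq_bounds:
  assumes s1: "1 \<le> card (verts Q)" and p: "1 \<le> p" and n1: "1 \<le> n"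
  shows "bseq Q n \<le> lagr_seq p Q P n" "lagr_seq p Q P n \<le> Sup (range (bseq Q))"
proof -
  let ?s = "card (verts Q)"
  let ?L = "Sup (range (bseq Q))"
  let ?U = "?L * real n powr (real ?s - real ?s / p)"
  let ?lo = "fact ?s * real n powr (- real ?s / p) * real (ex_num Q P n)"
  have npos: "0 < real n" using n1 by simp
  have lagrH: "lagr p Q H \<le> ?U \<and> fact ?s * real n powr (- real ?s / p) * real (num_copies Q H) \<le> lagr p Q H"
    if H: "H \<in> P" "card (verts H) = n" for H
  proof -
    let ?A = "{poly_QH Q H x | x. pnorm p (verts H) x = 1}"
    define u where "u = (\<lambda>i::nat. real (card (verts H)) powr (- 1 / p))"
    have n1': "1 \<le> card (verts H)" using H n1 by simp
    have u1: "pnorm p (verts H) u = 1" unfolding u_def by (rule poly_lower(1)[OF H(1) n1' p])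
    have u2: "fact ?s * real n powr (- real ?s / p) * real (num_copies Q H) \<le> poly_QH Q H u"
      using poly_lower(2)[OF H(1) n1' p, where Q = Q] H(2) unfolding u_def by simp
    have ub: "\<And>a. a \<in> ?A \<Longrightarrow> a \<le> ?U" using poly_upper[OF s1 H(1) n1' p] H(2) by auto
    have ne: "?A \<noteq> {}" using u1 by auto
    have "lagr p Q H \<le> ?U" unfolding lagr_def by (rule cSup_least[OF ne ub])
    moreover have "poly_QH Q H u \<le> lagr p Q H"
    proof -
      have bdd: "bdd_above ?A" by (rule bdd_aboveI[OF ub])
      have mem: "poly_QH Q H u \<in> ?A" using u1 by blast
      show ?thesis unfolding lagr_def by (rule cSup_upper[OF mem bdd])
    qed
    ultimately show ?thesis using u2 by linarith
  qed
  let ?B = "lagr p Q ` members_n P n"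
  have ne: "?B \<noteq> {}" using members_ne by auto
  have ub: "\<And>a. a \<in> ?B \<Longrightarrow> a \<le> ?U" using lagrH by (auto simp: members_n_def)
  have lnU: "lagr_n p Q P n \<le> ?U" unfolding lagr_n_def by (rule cSup_least[OF ne ub])
  obtain H where H: "H \<in> P" "card (verts H) = n" "card (cps Q H) = ex_num Q P n"
    using ex_attained by blast
  have "lagr p Q H \<le> lagr_n p Q P n"
  proof -
    have bdd: "bdd_above ?B" by (rule bdd_aboveI[OF ub])
    have mem: "lagr p Q H \<in> ?B" using H by (auto simp: members_n_def)
    show ?thesis unfolding lagr_n_def by (rule cSup_upper[OF mem bdd])
  qed
  then have lnL: "?lo \<le> lagr_n p Q P n" using lagrH[OF H(1,2)] H(3) by (simp add: num_copies_cps)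
  have e0: "real n powr (real ?s / p - real ?s) \<ge> 0" by simp
  have "lagr_seq p Q P n \<le> ?U * real n powr (real ?s / p - real ?s)"
    unfolding lagr_seq_def using lnU e0 by (rule mult_right_mono)
  also have "\<dots> = ?L * (real n powr (real ?s - real ?s / p) * real n powr (real ?s / p - real ?s))"
    by (simp only: mult.assoc)
  also have "real n powr (real ?s - real ?s / p) * real n powr (real ?s / p - real ?s) = 1"
    using npos by (simp add: powr_add[symmetric])
  finally show "lagr_seq p Q P n \<le> ?L" by simp
  have "?lo * real n powr (real ?s / p - real ?s) \<le> lagr_seq p Q P n"
    unfolding lagr_seq_def using lnL e0 by (rule mult_right_mono)
  moreover have "?lo * real n powr (real ?s / p - real ?s) = bseq Q n"
  proof -
    have "?lo * real n powr (real ?s / p - real ?s)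
        = fact ?s * real (ex_num Q P n) * (real n powr (- real ?s / p) * real n powr (real ?s / p - real ?s))"
      by (simp only: mult.assoc mult.commute mult.left_commute)
    also have "real n powr (- real ?s / p) * real n powr (real ?s / p - real ?s) = real n powr (- real ?s)"
      by (simp add: powr_add[symmetric])
    also have "real n powr (- real ?s) = 1 / real n ^ ?s"
      using npos by (simp add: powr_minus_divide powr_realpow)
    finally show ?thesis by (simp add: bseq_def)
  qed
  ultimately show "bseq Q n \<le> lagr_seq p Q P n" by simp
qed

lemma lagr_lim:
  assumes s1: "1 \<le> card (verts Q)" and p: "1 \<le> p"
  shows "lagr_seq p Q P \<longlonglongrightarrow> Sup (range (bseq Q))"
proof (rule tendsto_sandwich[OF _ _ bseq_lim[OF s1] tendsto_const])
  show "\<forall>\<^sub>F n in sequentially. bseq Q n \<le> lagr_seq p Q P n"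
    using eventually_ge_at_top[of "1::nat"] by eventually_elim (rule lagr_seq_bounds(1)[OF s1 p])
  show "\<forall>\<^sub>F n in sequentially. lagr_seq p Q P n \<le> Sup (range (bseq Q))"
    using eventually_ge_at_top[of "1::nat"] by eventually_elim (rule lagr_seq_bounds(2)[OF s1 p])
qed

end

theorem lemma3p11:
  fixes r s :: nat and Q :: hg and P :: "hg set" and p :: real
  assumes "2 \<le> r" and "r \<le> s"
    and "is_rgraph r Q" and "card (verts Q) = s"
    and "P \<noteq> {}"
    and "hereditary r P" and "isolated_closed P" and "multiplicative P"
    and "1 \<le> p"
  shows "convergent (pi_seq Q P) \<and> convergent (lagr_seq p Q P)
         \<and> lagr_prop p Q P = pi_prop Q P"
proof -
  interpret hprop r P using assms by (unfold_locales) auto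
  have s1: "1 \<le> card (verts Q)" using assms by simp
  have a: "pi_seq Q P \<longlonglongrightarrow> Sup (range (bseq Q))" by (rule pi_lim[OF s1])
  have b: "lagr_seq p Q P \<longlonglongrightarrow> Sup (range (bseq Q))" by (rule lagr_lim[OF s1 assms(9)])
  show ?thesis
    using a b by (auto simp: convergent_def pi_prop_def lagr_prop_def limI)
qed


end
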